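(* Let $k,\ell$ be non-negative integers with $\ell<2k$. Let $D$ be an orientation of a $(k,\ell)$-sparse loopless multigraph $H=(V,F)$ in which every vertex has indegree at most $k$, and let $u,v\in V$ be distinct with $\varrho_D(u)+\varrho_D(v)\le 2k-\ell$. A set $X\subseteq V$ containing both $u$ and $v$ is a $(k,\ell)$-block of $H$ if and only if $\varrho_D(u)+\varrho_D(v)=2k-\ell$, $\varrho_D(X)=0$, and every vertex in $X\setminus\{u,v\}$ has indegree exactly $k$ in $D$.
   Context: For $X\subseteq V$, $i_H(X)$ is the number of edges of $H$ with both endpoints in $X$. $H$ is $(k,\ell)$-sparse if $i_H(X)\le\max\{k|X|-\ell,0\}$ for every $X\subseteq V$. A $(k,\ell)$-block of $H$ is a set $X\subseteq V$ with $i_H(X)=\max\{k|X|-\ell,0\}$. For a vertex $w$, $\varrho_D(w)$ is its indegree in $D$; for a set $X\subseteq V$, $\varrho_D(X)$ is the number of arcs of $D$ with tail in $V\setminus X$ and head in $X$. *)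

theory Defs
  imports Main "HOL-Library.Multiset"
begin

definition loopless_multigraph :: "'a set \<Rightarrow> 'a set multiset \<Rightarrow> bool" where
  "loopless_multigraph V F \<longleftrightarrow> finite V \<and> (\<forall>e\<in>#F. e \<subseteq> V \<and> card e = 2)"

definition is_orientation :: "('a \<times> 'a) multiset \<Rightarrow> 'a set multiset \<Rightarrow> bool" where
  "is_orientation D F \<longleftrightarrow> image_mset (\<lambda>(x,y). {x,y}) D = F"

definition i_H :: "'a set multiset \<Rightarrow> 'a set \<Rightarrow> nat" where
  "i_H F X = size (filter_mset (\<lambda>e. e \<subseteq> X) F)"

definition sparse :: "nat \<Rightarrow> nat \<Rightarrow> 'a set \<Rightarrow> 'a set multiset \<Rightarrow> bool" where
  "sparse k l V F \<longleftrightarrow>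
     (\<forall>X\<subseteq>V. int (i_H F X) \<le> max (int k * int (card X) - int l) 0)"

definition block :: "nat \<Rightarrow> nat \<Rightarrow> 'a set \<Rightarrow> 'a set multiset \<Rightarrow> 'a set \<Rightarrow> bool" where
  "block k l V F X \<longleftrightarrow>
     X \<subseteq> V \<and> int (i_H F X) = max (int k * int (card X) - int l) 0"

definition indeg :: "('a \<times> 'a) multiset \<Rightarrow> 'a \<Rightarrow> nat" where
  "indeg D w = size (filter_mset (\<lambda>(x,y). y = w) D)"

definition indeg_set :: "('a \<times> 'a) multiset \<Rightarrow> 'a set \<Rightarrow> nat" where
  "indeg_set D X = size (filter_mset (\<lambda>(x,y). x \<notin> X \<and> y \<in> X) D)"

end

theory Submission
  imports Defs
begin

lemma filter_disj_size:
  assumes "\<And>a. \<not> (P a \<and> Q a)"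
  shows "size (filter_mset (\<lambda>a. P a \<or> Q a) M) = size (filter_mset P M) + size (filter_mset Q M)"
  using assms by (induction M) auto

lemma sum_indeg:
  assumes "finite X"
  shows "(\<Sum>w\<in>X. indeg D w) = size (filter_mset (\<lambda>(x,y). y \<in> X) D)"
  using assms
proof (induction X rule: finite_induct)
  case empty
  then show ?case by (simp add: case_prod_beta)
next
  case (insert w X)
  have "size (filter_mset (\<lambda>(x,y). y \<in> insert w X) D)
      = size (filter_mset (\<lambda>a. (\<lambda>(x,y). y = w) a \<or> (\<lambda>(x,y). y \<in> X) a) D)"
    by (rule arg_cong[where f=size], rule filter_mset_cong) auto
  also have "\<dots> = indeg D w + size (filter_mset (\<lambda>(x,y). y \<in> X) D)"
    unfolding indeg_def using insert(2) by (intro filter_disj_size) auto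
  finally show ?case using insert by simp
qed

lemma split_in:
  "size (filter_mset (\<lambda>(x,y). y \<in> X) D) =
   size (filter_mset (\<lambda>(x,y). x \<in> X \<and> y \<in> X) D) + indeg_set D X"
proof -
  have "size (filter_mset (\<lambda>(x,y). y \<in> X) D)
      = size (filter_mset (\<lambda>a. (\<lambda>(x,y). x \<in> X \<and> y \<in> X) a \<or> (\<lambda>(x,y). x \<notin> X \<and> y \<in> X) a) D)"
    by (rule arg_cong[where f=size], rule filter_mset_cong) auto
  also have "\<dots> = size (filter_mset (\<lambda>(x,y). x \<in> X \<and> y \<in> X) D) + indeg_set D X"
    unfolding indeg_set_def by (intro filter_disj_size) auto
  finally show ?thesis .
qed

lemma iH_eq:
  assumes "is_orientation D F"
  shows "i_H F X = size (filter_mset (\<lambda>(x,y). x \<in> X \<and> y \<in> X) D)"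
proof -
  have "filter_mset (\<lambda>e. e \<subseteq> X) (image_mset (\<lambda>(x,y). {x,y}) D)
     = image_mset (\<lambda>(x,y). {x,y}) (filter_mset (\<lambda>(x,y). x \<in> X \<and> y \<in> X) D)"
    by (induction D) auto
  then show ?thesis using assms unfolding i_H_def is_orientation_def by simp
qed

theorem lemma3:
  fixes k l :: nat and V :: "'a set" and F :: "'a set multiset"
    and D :: "('a \<times> 'a) multiset" and u v :: 'a and X :: "'a set"
  assumes "l < 2 * k"
    and "loopless_multigraph V F"
    and "sparse k l V F"
    and "is_orientation D F"
    and "\<forall>w\<in>V. indeg D w \<le> k"
    and "u \<in> V" and "v \<in> V" and "u \<noteq> v"
    and "indeg D u + indeg D v + l \<le> 2 * k"
    and "X \<subseteq> V" and "u \<in> X" and "v \<in> X"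
  shows "block k l V F X \<longleftrightarrow>
           (indeg D u + indeg D v + l = 2 * k \<and> indeg_set D X = 0 \<and>
            (\<forall>w\<in>X - {u, v}. indeg D w = k))"
proof -
  have fin: "finite X" using assms(2,10) unfolding loopless_multigraph_def
    using finite_subset by blast
  have cX: "card X \<ge> 2"
  proof -
    have "{u,v} \<subseteq> X" using assms by auto
    then have "card {u,v} \<le> card X" using fin card_mono by blast
    then show ?thesis using assms(8) by simp
  qed
  have S: "(\<Sum>w\<in>X. indeg D w) = i_H F X + indeg_set D X"
    using sum_indeg[OF fin] split_in iH_eq[OF assms(4)] by simp
  have X2: "X = insert u (insert v (X - {u,v}))" using assms by auto
  have S2: "(\<Sum>w\<in>X. indeg D w) = indeg D u + indeg D v + (\<Sum>w\<in>X-{u,v}. indeg D w)"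
    by (subst X2, simp add: fin assms(8))
  have cR: "card (X - {u,v}) = card X - 2"
    using fin assms(8,11,12) by (simp add: card_Diff_subset)
  have le: "(\<Sum>w\<in>X-{u,v}. indeg D w) \<le> (\<Sum>w\<in>X-{u,v}. k)"
    using assms(5,10) by (intro sum_mono) auto
  have eqiff: "(\<Sum>w\<in>X-{u,v}. indeg D w) = (\<Sum>w\<in>X-{u,v}. k) \<longleftrightarrow> (\<forall>w\<in>X - {u, v}. indeg D w = k)"
  proof
    assume h: "(\<Sum>w\<in>X-{u,v}. indeg D w) = (\<Sum>w\<in>X-{u,v}. k)"
    show "\<forall>w\<in>X - {u, v}. indeg D w = k"
    proof (rule ccontr)
      assume "\<not> (\<forall>w\<in>X - {u, v}. indeg D w = k)"
      then obtain w where w: "w \<in> X - {u,v}" "indeg D w \<noteq> k" by blast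
      then have "indeg D w < k" using assms(5,10) by (meson DiffD1 le_neq_implies_less subsetD)
      then have "(\<Sum>w\<in>X-{u,v}. indeg D w) < (\<Sum>w\<in>X-{u,v}. k)"
        using w assms(5,10) fin by (intro sum_strict_mono_ex1) auto
      then show False using h by simp
    qed
  qed simp
  have km: "(\<Sum>w\<in>X-{u,v}. k) = k * (card X - 2)" using cR by simp
  have pos: "int k * int (card X) - int l > 0" using assms(1) cX
  proof -
    have "k * 2 \<le> k * card X" using cX by (rule mult_le_mono2)
    then have "l < k * card X" using assms(1) by linarith
    then have "int l < int (k * card X)" by linarith
    then show ?thesis by simp
  qed
  have blk: "block k l V F X \<longleftrightarrow> int (i_H F X) = int k * int (card X) - int l"
    unfolding block_def using pos assms(10) by simp
  have kk: "k * (card X - 2) + 2 * k = k * card X" using cX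
    by (metis add.commute le_add_diff_inverse mult.commute mult_2 distrib_left)
  define s where "s = (\<Sum>w\<in>X-{u,v}. indeg D w)"
  define a where "a = indeg D u + indeg D v"
  have e1: "i_H F X + indeg_set D X = a + s" using S S2 unfolding a_def s_def by simp
  have e2: "s \<le> k * (card X - 2)" unfolding s_def using le[unfolded km] .
  have e3: "s = k * (card X - 2) \<longleftrightarrow> (\<forall>w\<in>X - {u, v}. indeg D w = k)"
    unfolding s_def using eqiff[unfolded km] .
  have e4: "a + l \<le> 2 * k" using assms(9) unfolding a_def by simp
  have e5: "int (i_H F X) = int k * int (card X) - int l \<longleftrightarrow> i_H F X + l = k * card X"
    by (metis of_nat_add of_nat_mult of_nat_eq_iff add_diff_cancel_right' diff_add_cancel)
  have "i_H F X + l = k * card X \<longleftrightarrow> (a + l = 2 * k \<and> indeg_set D X = 0 \<and> s = k * (card X - 2))"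
    using e1 e2 e4 kk by linarith
  then show ?thesis unfolding blk e5 e3 a_def by simp
qed

end
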